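(* Let $C\in\mathbb{R}^{n\times n}$ be symmetric, $\rho>0$, and let $(\tilde\sigma^k,\sigma^k,y^k)$ be generated by the ADMM-BM algorithm described in the context, with Assumption A holding. Then for every iteration $k$, $$L_\rho(\tilde\sigma^k,\sigma^k,y^k)-L_\rho(\tilde\sigma^{k+1},\sigma^{k+1},y^{k+1})\ \ge\ \Big(\frac{\rho\min_{i\in[n]}\|\gamma_i^k\|}{2}-\frac{\|C\|^2}{\rho}\Big)\|\tilde\sigma^{k+1}-\tilde\sigma^k\|_F^2+\frac\rho2\|\sigma^{k+1}-\sigma^k\|_F^2.$$
   Context: $\langle A,B\rangle=\mathrm{Tr}(A^\top B)$, $\|\cdot\|_F$ Frobenius norm, $\|C\|$ spectral norm. For $\sigma\in\mathbb{R}^{n\times r}$, $\sigma_i$ is its $i$-th row; $\mathcal{M}=\{\sigma\in\mathbb{R}^{n\times r}:\|\sigma_i\|=1\ \forall i\}$. ADMM-BM with parameter $\rho$: choose $\tilde\sigma^0\in\mathcal{M}$, $\sigma^0=\tilde\sigma^0$, $y^0=C\tilde\sigma^0$. For $k=0,1,\dots$: $\gamma^k=\sigma^k-\frac1\rho(y^k+C\sigma^k)$ with rows $\gamma_i^k$; $\tilde\sigma^{k+1}_i=\gamma_i^k/\|\gamma_i^k\|$; $\sigma^{k+1}=\tilde\sigma^{k+1}+\frac1\rho(y^k-C\tilde\sigma^{k+1})$; $y^{k+1}=y^k+\rho(\tilde\sigma^{k+1}-\sigma^{k+1})$. Assumption A: $\gamma_i^k\neq0$ for all $i,k$. $L_\rho(\tilde\sigma,\sigma,y)=\langle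 C,\tilde\sigma\sigma^\top\rangle+\langle y,\tilde\sigma-\sigma\rangle+\frac\rho2\|\tilde\sigma-\sigma\|_F^2+\sum_i\mathcal{I}_{\{\|u\|=1\}}(\tilde\sigma_i)$, $\mathcal{I}_S$ the indicator function of $S$. *)

theory Defs
  imports "HOL-Analysis.Analysis"
begin

text \<open>Matrices in R^{n x r} are represented as real^'r^'n (row i is A $ i).\<close>

definition frob_inner :: "real^'c^'b \<Rightarrow> real^'c^'b \<Rightarrow> real" where
  "frob_inner A B = (\<Sum>i\<in>UNIV. \<Sum>j\<in>UNIV. A $ i $ j * B $ i $ j)"

definition frob_norm :: "real^'c^'b \<Rightarrow> real" where
  "frob_norm A = sqrt (frob_inner A A)"

definition spec_norm :: "real^'n^'n \<Rightarrow> real" where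
  "spec_norm C = onorm (\<lambda>x. C *v x)"

definition oblique_M :: "(real^'r^'n) set" where
  "oblique_M = {s. \<forall>i. norm (s $ i) = 1}"

definition sphere_ind :: "real^'r \<Rightarrow> ereal" where
  "sphere_ind u = (if norm u = 1 then 0 else \<infinity>)"

definition L_rho :: "real \<Rightarrow> real^'n^'n \<Rightarrow> real^'r^'n \<Rightarrow> real^'r^'n \<Rightarrow> real^'r^'n \<Rightarrow> ereal" where
  "L_rho \<rho> C st s y =
     ereal (frob_inner C (st ** transpose s) + frob_inner y (st - s)
            + \<rho> / 2 * (frob_norm (st - s))\<^sup>2)
     + (\<Sum>i\<in>UNIV. sphere_ind (st $ i))"

end

theory Submission
  imports Defs
begin


lemma frob_inner_eq: "frob_inner A B = inner A B"
  unfolding frob_inner_def inner_vec_def inner_real_def by simp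

lemma frob_norm_eq: "frob_norm A = norm A"
  unfolding frob_norm_def frob_inner_eq by (simp add: norm_eq_sqrt_inner)

lemma mm_diff: "(C::real^'n^'m) ** (A - B) = C ** A - C ** B"
  by (simp add: matrix_matrix_mult_def vec_eq_iff sum_subtractf right_diff_distrib)

lemma mm_scale: "(C::real^'n^'m) ** (c *\<^sub>R A) = c *\<^sub>R (C ** A)"
  by (simp add: matrix_matrix_mult_def vec_eq_iff scaleR_sum_right mult_ac sum_distrib_left)

lemma trace_lem: "inner (C::real^'n^'n) (A ** transpose B) = inner (C ** B) (A::real^'r^'n)"
proof -
  have "inner C (A ** transpose B) = (\<Sum>i\<in>UNIV. \<Sum>j\<in>UNIV. \<Sum>k\<in>UNIV. C$i$j * A$i$k * B$j$k)"
    by (simp add: inner_vec_def matrix_matrix_mult_def transpose_def sum_distrib_left mult_ac)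
  also have "\<dots> = (\<Sum>i\<in>UNIV. \<Sum>k\<in>UNIV. \<Sum>j\<in>UNIV. C$i$j * A$i$k * B$j$k)"
    by (rule sum.cong[OF refl], rule sum.swap)
  also have "\<dots> = inner (C ** B) A"
    by (simp add: inner_vec_def matrix_matrix_mult_def sum_distrib_left sum_distrib_right mult_ac)
  finally show ?thesis .
qed

lemma sym_lem: assumes "transpose C = C"
  shows "inner ((C::real^'n^'n) ** B) (A::real^'r^'n) = inner (C ** A) B"
proof -
  have "inner (C ** B) A = (\<Sum>i\<in>UNIV. \<Sum>k\<in>UNIV. \<Sum>j\<in>UNIV. C$i$j * B$j$k * A$i$k)"
    by (simp add: inner_vec_def matrix_matrix_mult_def sum_distrib_left sum_distrib_right mult_ac)
  also have "\<dots> = (\<Sum>i\<in>UNIV. \<Sum>k\<in>UNIV. \<Sum>j\<in>UNIV. C$j$i * B$j$k * A$i$k)"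
  proof -
    have "\<And>i j. C$j$i = C$i$j"
    proof -
      fix i j
      have "(transpose C)$i$j = C$j$i" by (simp add: transpose_def)
      then show "C$j$i = C$i$j" using assms by simp
    qed
    then show ?thesis by simp
  qed
  also have "\<dots> = (\<Sum>i\<in>UNIV. \<Sum>j\<in>UNIV. \<Sum>k\<in>UNIV. C$j$i * B$j$k * A$i$k)"
    by (rule sum.cong[OF refl], rule sum.swap)
  also have "\<dots> = (\<Sum>j\<in>UNIV. \<Sum>i\<in>UNIV. \<Sum>k\<in>UNIV. C$j$i * B$j$k * A$i$k)"
    by (rule sum.swap)
  also have "\<dots> = (\<Sum>j\<in>UNIV. \<Sum>k\<in>UNIV. \<Sum>i\<in>UNIV. C$j$i * B$j$k * A$i$k)"
    by (rule sum.cong[OF refl], rule sum.swap)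
  also have "\<dots> = inner (C ** A) B"
    by (simp add: inner_vec_def matrix_matrix_mult_def sum_distrib_left sum_distrib_right mult_ac)
  finally show ?thesis .
qed

lemma norm_mm: "(norm ((C::real^'n^'n) ** (X::real^'r^'n)))\<^sup>2 \<le> (spec_norm C)\<^sup>2 * (norm X)\<^sup>2"
proof -
  define col where "col j = (\<chi> i. X$i$j)" for j
  have bl: "bounded_linear (\<lambda>x. C *v x)"
    by (simp add: linear_conv_bounded_linear matrix_vector_mul_linear)
  have e1: "(norm (C ** X))\<^sup>2 = (\<Sum>j\<in>UNIV. (norm (C *v col j))\<^sup>2)"
  proof -
    have "(norm (C ** X))\<^sup>2 = (\<Sum>i\<in>UNIV. \<Sum>j\<in>UNIV. ((C ** X)$i$j)\<^sup>2)"
      unfolding power2_norm_eq_inner by (simp add: inner_vec_def power2_eq_square)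
    also have "\<dots> = (\<Sum>j\<in>UNIV. \<Sum>i\<in>UNIV. ((C *v col j)$i)\<^sup>2)"
      by (subst sum.swap) (simp add: col_def matrix_matrix_mult_def matrix_vector_mult_def)
    finally show ?thesis unfolding power2_norm_eq_inner by (simp add: inner_vec_def power2_eq_square)
  qed
  have e2: "(norm X)\<^sup>2 = (\<Sum>j\<in>UNIV. (norm (col j))\<^sup>2)"
  proof -
    have "(norm X)\<^sup>2 = (\<Sum>i\<in>UNIV. \<Sum>j\<in>UNIV. (X$i$j)\<^sup>2)"
      unfolding power2_norm_eq_inner by (simp add: inner_vec_def power2_eq_square)
    also have "\<dots> = (\<Sum>j\<in>UNIV. \<Sum>i\<in>UNIV. ((col j)$i)\<^sup>2)"
      by (subst sum.swap) (simp add: col_def)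
    finally show ?thesis unfolding power2_norm_eq_inner by (simp add: inner_vec_def power2_eq_square)
  qed
  have "\<And>j. (norm (C *v col j))\<^sup>2 \<le> (spec_norm C)\<^sup>2 * (norm (col j))\<^sup>2"
  proof -
    fix j
    have "norm (C *v col j) \<le> spec_norm C * norm (col j)"
      unfolding spec_norm_def using onorm[OF bl] by blast
    then show "(norm (C *v col j))\<^sup>2 \<le> (spec_norm C)\<^sup>2 * (norm (col j))\<^sup>2"
      by (metis norm_ge_zero power_mono power_mult_distrib)
  qed
  then have "(\<Sum>j\<in>UNIV. (norm (C *v col j))\<^sup>2) \<le> (\<Sum>j\<in>UNIV. (spec_norm C)\<^sup>2 * (norm (col j))\<^sup>2)"
    by (rule sum_mono)
  then show ?thesis by (simp only: e1 e2 sum_distrib_left)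
qed

lemma obl_norm: assumes "A \<in> oblique_M" shows "inner A (A::real^'r^'n) = real CARD('n)"
proof -
  have "inner A A = (\<Sum>i\<in>UNIV. (norm (A$i))\<^sup>2)"
    unfolding inner_vec_def power2_norm_eq_inner ..
  then show ?thesis using assms unfolding oblique_M_def by simp
qed

lemma L_eq: assumes "st \<in> oblique_M"
  shows "L_rho \<rho> C st s y = ereal (inner (C ** s) st + inner y (st - s) + \<rho>/2 * (norm (st - s))\<^sup>2)"
  using assms unfolding L_rho_def oblique_M_def sphere_ind_def
  by (simp add: frob_inner_eq frob_norm_eq trace_lem)

lemma row_bound:
  fixes g a a' :: "real^'r^'n"
  assumes a: "a \<in> oblique_M" and a'_def: "\<And>i. a'$i = (1 / norm (g$i)) *\<^sub>R (g$i)"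
    and nz: "\<And>i. g$i \<noteq> 0"
  shows "inner g (a' - a) \<ge> Min (range (\<lambda>i. norm (g$i))) / 2 * (norm (a' - a))\<^sup>2"
proof -
  let ?m = "Min (range (\<lambda>i. norm (g$i)))"
  have row: "inner (g$i) (a'$i - a$i) \<ge> ?m / 2 * (norm (a'$i - a$i))\<^sup>2" for i
  proof -
    have ng: "norm (g$i) > 0" using nz by simp
    have gi: "g$i = norm (g$i) *\<^sub>R a'$i" using a'_def[of i] ng by simp
    have na': "inner (a'$i) (a'$i) = 1" using a'_def[of i] ng
      by (simp add: power2_norm_eq_inner[symmetric] norm_sgn)
    have na: "inner (a$i) (a$i) = 1" using a unfolding oblique_M_def
      by (simp add: power2_norm_eq_inner[symmetric])
    have e: "(norm (a'$i - a$i))\<^sup>2 = 2 - 2 * inner (a'$i) (a$i)"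
      unfolding power2_norm_eq_inner using na na'
      by (simp add: inner_diff_left inner_diff_right inner_commute)
    have "inner (g$i) (a'$i - a$i) = norm (g$i) * (1 - inner (a'$i) (a$i))"
      by (subst gi) (simp add: inner_diff_right na' algebra_simps)
    also have "\<dots> = norm (g$i) / 2 * (norm (a'$i - a$i))\<^sup>2" using e by simp
    also have "\<dots> \<ge> ?m / 2 * (norm (a'$i - a$i))\<^sup>2"
      by (intro mult_right_mono divide_right_mono) (auto intro: Min_le)
    finally show ?thesis .
  qed
  have "(norm (a' - a))\<^sup>2 = (\<Sum>i\<in>UNIV. (norm (a'$i - a$i))\<^sup>2)"
    unfolding power2_norm_eq_inner inner_vec_def by simp
  then have "?m / 2 * (norm (a' - a))\<^sup>2 = (\<Sum>i\<in>UNIV. ?m / 2 * (norm (a'$i - a$i))\<^sup>2)"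
    by (simp add: sum_distrib_left)
  also have "\<dots> \<le> (\<Sum>i\<in>UNIV. inner (g$i) (a'$i - a$i))"
    by (rule sum_mono) (rule row)
  also have "\<dots> = inner g (a' - a)" unfolding inner_vec_def by simp
  finally show ?thesis .
qed

lemma step:
  fixes C :: "real^'n^'n" and a b Y a' b' Y' g :: "real^'r^'n"
  assumes symC: "transpose C = C" and rho: "\<rho> > 0"
    and a: "a \<in> oblique_M" and a': "a' \<in> oblique_M"
    and Y: "Y = C ** a" and Y': "Y' = C ** a'"
    and g: "g = b - (1 / \<rho>) *\<^sub>R (Y + C ** b)"
    and a'_def: "\<And>i. a'$i = (1 / norm (g$i)) *\<^sub>R (g$i)"
    and nz: "\<And>i. g$i \<noteq> 0"
    and b': "b' = a' + (1 / \<rho>) *\<^sub>R (Y - C ** a')"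
    and Yup: "Y' = Y + \<rho> *\<^sub>R (a' - b')"
  shows "(inner (C ** b) a + inner Y (a - b) + \<rho>/2 * (norm (a - b))\<^sup>2)
       - (inner (C ** b') a' + inner Y' (a' - b') + \<rho>/2 * (norm (a' - b'))\<^sup>2)
       \<ge> (\<rho> * Min (range (\<lambda>i. norm (g$i))) / 2 - (spec_norm C)\<^sup>2 / \<rho>) * (norm (a' - a))\<^sup>2
          + \<rho> / 2 * (norm (b' - b))\<^sup>2"
proof -
  let ?m = "Min (range (\<lambda>i. norm (g$i)))"
  have aa: "inner a a = inner a' a'" using obl_norm[OF a] obl_norm[OF a'] by simp
  have rg: "\<rho> *\<^sub>R g = \<rho> *\<^sub>R b - Y - C ** b"
  proof -
    have "\<rho> *\<^sub>R g = \<rho> *\<^sub>R b - \<rho> *\<^sub>R ((1 / \<rho>) *\<^sub>R (Y + C ** b))"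
      unfolding g by (rule scaleR_diff_right)
    also have "\<dots> = \<rho> *\<^sub>R b - (Y + C ** b)" using rho by simp
    finally show ?thesis by simp
  qed
  have S1: "(inner (C ** b) a + inner Y (a - b) + \<rho>/2 * (norm (a - b))\<^sup>2)
      - (inner (C ** b) a' + inner Y (a' - b) + \<rho>/2 * (norm (a' - b))\<^sup>2) = \<rho> * inner g (a' - a)"
  proof -
    have "\<rho> * inner g (a' - a) = inner (\<rho> *\<^sub>R g) (a' - a)" by simp
    also have "\<dots> = inner (\<rho> *\<^sub>R b - Y - C ** b) (a' - a)" by (simp only: rg)
    finally have r: "\<rho> * inner g (a' - a) = inner (\<rho> *\<^sub>R b - Y - C ** b) (a' - a)" .
    show ?thesis unfolding r power2_norm_eq_inner using aa
      by (simp add: inner_diff_left inner_diff_right inner_commute algebra_simps)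
  qed
  have ca': "C ** a' = Y - \<rho> *\<^sub>R (b' - a')"
  proof -
    have "b' - a' = (1 / \<rho>) *\<^sub>R (Y - C ** a')" using b' by simp
    then have "\<rho> *\<^sub>R (b' - a') = Y - C ** a'" using rho by simp
    then show ?thesis by simp
  qed
  have S2: "(inner (C ** b) a' + inner Y (a' - b) + \<rho>/2 * (norm (a' - b))\<^sup>2)
      - (inner (C ** b') a' + inner Y (a' - b') + \<rho>/2 * (norm (a' - b'))\<^sup>2) = \<rho>/2 * (norm (b' - b))\<^sup>2"
    unfolding sym_lem[OF symC, of b a'] sym_lem[OF symC, of b' a'] ca' power2_norm_eq_inner
    by (simp add: inner_diff_left inner_diff_right inner_commute algebra_simps)
  have dY: "Y' - Y = C ** (a' - a)" using Y Y' by (simp add: mm_diff)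
  have S3: "(inner (C ** b') a' + inner Y (a' - b') + \<rho>/2 * (norm (a' - b'))\<^sup>2)
      - (inner (C ** b') a' + inner Y' (a' - b') + \<rho>/2 * (norm (a' - b'))\<^sup>2) = - (norm (Y' - Y))\<^sup>2 / \<rho>"
  proof -
    have d: "a' - b' = (1/\<rho>) *\<^sub>R (Y' - Y)" using Yup rho by simp
    have "(inner (C ** b') a' + inner Y (a' - b') + \<rho>/2 * (norm (a' - b'))\<^sup>2)
      - (inner (C ** b') a' + inner Y' (a' - b') + \<rho>/2 * (norm (a' - b'))\<^sup>2)
      = inner (Y - Y') (a' - b')" by (simp add: inner_diff_left)
    also have "\<dots> = - (1/\<rho>) * inner (Y' - Y) (Y' - Y)" unfolding d
      by (simp add: inner_diff_left[of Y Y'] inner_diff_left[of Y' Y] diff_divide_distrib)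
    finally show ?thesis by (simp add: power2_norm_eq_inner)
  qed
  have S3b: "- (norm (Y' - Y))\<^sup>2 / \<rho> \<ge> - (spec_norm C)\<^sup>2 / \<rho> * (norm (a' - a))\<^sup>2"
    using norm_mm[of C "a' - a"] rho unfolding dY by (simp add: divide_right_mono)
  have S4: "\<rho> * inner g (a' - a) \<ge> \<rho> * ?m / 2 * (norm (a' - a))\<^sup>2"
    using row_bound[OF a a'_def nz] rho mult_left_mono[of _ _ \<rho>] by fastforce
  show ?thesis using S1 S2 S3 S3b S4 by (simp add: algebra_simps)
qed

theorem lemma1:
  fixes C :: "real^'n^'n"
    and \<rho> :: real
    and st s y \<gamma> :: "nat \<Rightarrow> real^'r^'n"
  assumes symC: "transpose C = C"
    and rho_pos: "\<rho> > 0"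
    and init_M: "st 0 \<in> oblique_M"
    and init_s: "s 0 = st 0"
    and init_y: "y 0 = C ** st 0"
    and gamma_def: "\<And>k. \<gamma> k = s k - (1 / \<rho>) *\<^sub>R (y k + C ** s k)"
    and st_upd: "\<And>k i. st (Suc k) $ i = (1 / norm (\<gamma> k $ i)) *\<^sub>R (\<gamma> k $ i)"
    and s_upd: "\<And>k. s (Suc k) = st (Suc k) + (1 / \<rho>) *\<^sub>R (y k - C ** st (Suc k))"
    and y_upd: "\<And>k. y (Suc k) = y k + \<rho> *\<^sub>R (st (Suc k) - s (Suc k))"
    and assumptionA: "\<And>k i. \<gamma> k $ i \<noteq> 0"
  shows "\<forall>k. L_rho \<rho> C (st k) (s k) (y k) - L_rho \<rho> C (st (Suc k)) (s (Suc k)) (y (Suc k))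
           \<ge> ereal ((\<rho> * Min (range (\<lambda>i. norm (\<gamma> k $ i))) / 2 - (spec_norm C)\<^sup>2 / \<rho>)
                     * (frob_norm (st (Suc k) - st k))\<^sup>2
                   + \<rho> / 2 * (frob_norm (s (Suc k) - s k))\<^sup>2)"
proof -
  have Mk: "st k \<in> oblique_M" for k
  proof (cases k)
    case 0 then show ?thesis using init_M by simp
  next
    case (Suc j)
    show ?thesis unfolding oblique_M_def Suc using assumptionA[of j]
      by (simp add: st_upd norm_sgn)
  qed
  have yk: "y k = C ** st k" for k
  proof (cases k)
    case 0 then show ?thesis using init_y by simp
  next
    case (Suc j)
    have "s (Suc j) - st (Suc j) = (1 / \<rho>) *\<^sub>R (y j - C ** st (Suc j))" using s_upd[of j] by simp
    then have "\<rho> *\<^sub>R (s (Suc j) - st (Suc j)) = y j - C ** st (Suc j)" using rho_pos by simp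
    then have "\<rho> *\<^sub>R (st (Suc j) - s (Suc j)) = C ** st (Suc j) - y j"
      by (metis minus_diff_eq scaleR_minus_right)
    then show ?thesis using y_upd[of j] Suc by simp
  qed
  show ?thesis
  proof
    fix k
    have "(\<rho> * Min (range (\<lambda>i. norm (\<gamma> k $ i))) / 2 - (spec_norm C)\<^sup>2 / \<rho>) * (norm (st (Suc k) - st k))\<^sup>2
          + \<rho> / 2 * (norm (s (Suc k) - s k))\<^sup>2
       \<le> (inner (C ** s k) (st k) + inner (y k) (st k - s k) + \<rho>/2 * (norm (st k - s k))\<^sup>2)
       - (inner (C ** s (Suc k)) (st (Suc k)) + inner (y (Suc k)) (st (Suc k) - s (Suc k))
          + \<rho>/2 * (norm (st (Suc k) - s (Suc k)))\<^sup>2)"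
      by (rule step[OF symC rho_pos Mk Mk yk yk gamma_def st_upd assumptionA s_upd y_upd])
    then show "L_rho \<rho> C (st k) (s k) (y k) - L_rho \<rho> C (st (Suc k)) (s (Suc k)) (y (Suc k))
           \<ge> ereal ((\<rho> * Min (range (\<lambda>i. norm (\<gamma> k $ i))) / 2 - (spec_norm C)\<^sup>2 / \<rho>)
                     * (frob_norm (st (Suc k) - st k))\<^sup>2
                   + \<rho> / 2 * (frob_norm (s (Suc k) - s k))\<^sup>2)"
      unfolding L_eq[OF Mk] frob_norm_eq by simp
  qed
qed

end
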